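(* Let $(X,d)$ be a metric vector space (with translation-invariant metric $d$) such that $\dim X<\infty$. Let $A_0\subseteq A_1\subseteq A_2\subseteq\cdots\subseteq X$ be a nested sequence of subsets of $X$ satisfying: (A1) there is a map $K:\mathbb{N}\to\mathbb{N}$ with $K(n)\ge n$ and $A_n+A_n\subseteq A_{K(n)}$ for all $n\in\mathbb{N}$; (A2) $\lambda A_n\subseteq A_n$ for all $n\in\mathbb{N}$ and all scalars $\lambda$; (A3) $\bigcup_{n\in\mathbb{N}}A_n$ is dense in $X$. Then there exists $N\in\mathbb{N}$ such that $A_N=X$.
   Context: For subsets $A,B$ of a vector space and a scalar $\lambda$, $A+B=\{a+b:a\in A,b\in B\}$ and $\lambda A=\{\lambda a:a\in A\}$. *)

theory Defs
  imports "HOL-Analysis.Analysis"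
begin

definition metric_vector_space :: "'a::{real_vector, metric_space} itself \<Rightarrow> bool" where
  "metric_vector_space _ \<longleftrightarrow>
     (\<forall>x y z::'a. dist (x + z) (y + z) = dist x y) \<and>
     continuous_on UNIV (\<lambda>p::'a \<times> 'a. fst p + snd p) \<and>
     continuous_on UNIV (\<lambda>p::real \<times> 'a. fst p *\<^sub>R snd p)"

end

theory Submission
  imports Defs
begin

lemma mvs_tendsto_add:
  fixes f g :: "'b \<Rightarrow> 'a::{real_vector, metric_space}"
  assumes mvs: "metric_vector_space TYPE('a)" and "(f \<longlongrightarrow> a) F" "(g \<longlongrightarrow> b) F"
  shows "((\<lambda>x. f x + g x) \<longlongrightarrow> a + b) F"
proof -
  have c: "continuous_on UNIV (\<lambda>p::'a\<times>'a. fst p + snd p)"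
    using mvs unfolding metric_vector_space_def by blast
  from continuous_on_tendsto_compose[OF c tendsto_Pair[OF assms(2,3)]] show ?thesis by simp
qed

lemma mvs_tendsto_scaleR:
  fixes f :: "'b \<Rightarrow> real" and g :: "'b \<Rightarrow> 'a::{real_vector, metric_space}"
  assumes mvs: "metric_vector_space TYPE('a)" and "(f \<longlongrightarrow> a) F" "(g \<longlongrightarrow> b) F"
  shows "((\<lambda>x. f x *\<^sub>R g x) \<longlongrightarrow> a *\<^sub>R b) F"
proof -
  have c: "continuous_on UNIV (\<lambda>p::real\<times>'a. fst p *\<^sub>R snd p)"
    using mvs unfolding metric_vector_space_def by blast
  from continuous_on_tendsto_compose[OF c tendsto_Pair[OF assms(2,3)]] show ?thesis by simp
qed

lemma span_closed_mvs:
  fixes S :: "'a::{real_vector, metric_space} set"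
  assumes mvs: "metric_vector_space TYPE('a)" and fin: "finite S"
  shows "closed (span S)"
  using fin
proof (induction S rule: finite_induct)
  case empty
  show ?case by simp
next
  case (insert a F)
  show ?case
  proof (cases "a \<in> span F")
    case True
    then show ?thesis using insert by (simp add: span_redundant)
  next
    case False
    show ?thesis unfolding closed_sequential_limits
    proof (intro allI impI, elim conjE)
      fix x l assume xs: "\<forall>n. x n \<in> span (insert a F)" and xl: "x \<longlonglongrightarrow> l"
      from xs have "\<forall>n. \<exists>k. x n - k *\<^sub>R a \<in> span F" by (simp add: span_insert)
      then obtain t where t: "\<And>n. x n - t n *\<^sub>R a \<in> span F" by metis
      define \<phi> where "\<phi> n = t n / (1 + \<bar>t n\<bar>)" for n
      have phiI: "\<phi> n \<in> {-1..1}" for n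
        unfolding \<phi>_def by (auto simp: divide_simps abs_if)
      obtain p r where p: "p \<in> {-1..1}" and r: "strict_mono r" and pl: "(\<phi> \<circ> r) \<longlonglongrightarrow> p"
        using compact_imp_seq_compact[OF compact_Icc, of "-1::real" 1] phiI
        unfolding seq_compact_def by metis
      have pl': "(\<lambda>n. \<phi> (r n)) \<longlonglongrightarrow> p" using pl by (simp add: o_def)
      have xr: "(\<lambda>n. x (r n)) \<longlonglongrightarrow> l" using LIMSEQ_subseq_LIMSEQ[OF xl r] by (simp add: o_def)
      have abs_phi: "\<bar>\<phi> n\<bar> = \<bar>t n\<bar> / (1 + \<bar>t n\<bar>)" for n
        unfolding \<phi>_def by (simp add: abs_divide)
      have tinv: "t n = \<phi> n / (1 - \<bar>\<phi> n\<bar>)" for n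
      proof -
        have "1 - \<bar>\<phi> n\<bar> = 1 / (1 + \<bar>t n\<bar>)" unfolding abs_phi
          by (simp add: divide_simps)
        then show ?thesis unfolding \<phi>_def by simp
      qed
      have iinv: "inverse (t n) = (1 - \<bar>\<phi> n\<bar>) / \<phi> n" for n
      proof -
        have "1 - \<bar>\<phi> n\<bar> = 1 / (1 + \<bar>t n\<bar>)" unfolding abs_phi
          by (simp add: divide_simps)
        then show ?thesis unfolding \<phi>_def by (simp add: divide_simps)
      qed
      have clF: "closed (span F)" by (rule insert.IH)
      show "l \<in> span (insert a F)"
      proof (cases "\<bar>p\<bar> = 1")
        case False
        with p have pp: "1 - \<bar>p\<bar> \<noteq> 0" by auto
        have tl: "(\<lambda>n. t (r n)) \<longlonglongrightarrow> p / (1 - \<bar>p\<bar>)"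
          unfolding tinv by (intro tendsto_intros pl' pp)
        have lim: "(\<lambda>n. x (r n) + (- t (r n)) *\<^sub>R a) \<longlonglongrightarrow> l + (- (p / (1 - \<bar>p\<bar>))) *\<^sub>R a"
          by (intro mvs_tendsto_add[OF mvs] mvs_tendsto_scaleR[OF mvs] xr tendsto_intros tl)
        have mem: "\<forall>n. x (r n) + (- t (r n)) *\<^sub>R a \<in> span F"
          using t by (simp add: algebra_simps)
        have "l + (- (p / (1 - \<bar>p\<bar>))) *\<^sub>R a \<in> span F"
          using clF[unfolded closed_sequential_limits, rule_format, OF conjI[OF mem lim]] .
        then have "l - (p / (1 - \<bar>p\<bar>)) *\<^sub>R a \<in> span F" by simp
        then show ?thesis by (auto simp: span_insert)
      next
        case True
        then have p0: "p \<noteq> 0" by auto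
        have il: "(\<lambda>n. inverse (t (r n))) \<longlonglongrightarrow> 0"
        proof -
          have "(\<lambda>n. (1 - \<bar>\<phi> (r n)\<bar>) / \<phi> (r n)) \<longlonglongrightarrow> (1 - \<bar>p\<bar>) / p"
            by (intro tendsto_intros pl' p0)
          then show ?thesis using True by (simp add: iinv)
        qed
        have ev: "\<forall>\<^sub>F n in sequentially. \<phi> (r n) \<noteq> 0"
          using tendsto_imp_eventually_ne[OF pl' p0] .
        have cl: "(\<lambda>n. - (inverse (t (r n)) * t (r n))) \<longlonglongrightarrow> -1"
        proof (rule tendsto_eventually)
          show "\<forall>\<^sub>F n in sequentially. - (inverse (t (r n)) * t (r n)) = -1"
            using ev by eventually_elim (auto simp: \<phi>_def)
        qed
        have lim2: "(\<lambda>n. inverse (t (r n)) *\<^sub>R x (r n) + (- (inverse (t (r n)) * t (r n))) *\<^sub>R a)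
               \<longlonglongrightarrow> 0 *\<^sub>R l + (-1) *\<^sub>R a" (is "?Y \<longlonglongrightarrow> _")
          by (intro mvs_tendsto_add[OF mvs] mvs_tendsto_scaleR[OF mvs] xr il cl tendsto_const)
        have mem2: "\<forall>n. ?Y n \<in> span F"
        proof
          fix n
          have "inverse (t (r n)) *\<^sub>R (x (r n) - t (r n) *\<^sub>R a) \<in> span F"
            by (rule span_scale[OF t])
          then show "inverse (t (r n)) *\<^sub>R x (r n) + (- (inverse (t (r n)) * t (r n))) *\<^sub>R a \<in> span F"
            by (simp add: scaleR_diff_right algebra_simps)
        qed
        have "0 *\<^sub>R l + (-1) *\<^sub>R a \<in> span F"
          using clF[unfolded closed_sequential_limits, rule_format, OF conjI[OF mem2 lim2]] .
        then have "- a \<in> span F" by simp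
        then have "a \<in> span F" using span_neg by fastforce
        with False show ?thesis by blast
      qed
    qed
  qed
qed

theorem mainTheorem1:
  fixes A :: "nat \<Rightarrow> 'a::{real_vector, metric_space} set"
    and K :: "nat \<Rightarrow> nat"
  assumes mvs: "metric_vector_space TYPE('a)"
    and findim: "\<exists>B::'a set. finite B \<and> span B = UNIV"
    and nested: "\<And>n. A n \<subseteq> A (Suc n)"
    and K_ge: "\<And>n. K n \<ge> n"
    and A1: "\<And>n. {a + b | a b. a \<in> A n \<and> b \<in> A n} \<subseteq> A (K n)"
    and A2: "\<And>n (c::real). (\<lambda>x. c *\<^sub>R x) ` A n \<subseteq> A n"
    and A3: "closure (\<Union>n. A n) = UNIV"
  shows "\<exists>N. A N = UNIV"
proof -
  have mono: "n \<le> m \<Longrightarrow> A n \<subseteq> A m" for n m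
    using lift_Suc_mono_le[of A, OF nested] by blast
  obtain B :: "'a set" where B: "finite B" "span B = UNIV" using findim by blast
  obtain C where C: "C \<subseteq> (\<Union>n. A n)" "independent C" "(\<Union>n. A n) \<subseteq> span C"
    by (rule maximal_independent_subset)
  have finC: "finite C" using independent_span_bound[OF B(1) C(2)] B(2) by blast
  have "closed (span C)" by (rule span_closed_mvs[OF mvs finC])
  then have "closure (\<Union>n. A n) \<subseteq> span C" using C(3) by (rule closure_minimal[rotated])
  then have spanC: "span C = UNIV" using A3 by blast
  have "\<exists>n. C \<subseteq> A n" using finC C(1)
  proof (induction C rule: finite_induct)
    case empty then show ?case by auto
  next
    case (insert c F)
    then obtain n where n: "F \<subseteq> A n" by auto
    from insert obtain m where m: "c \<in> A m" by auto
    have "F \<subseteq> A (max n m)" using n mono[of n "max n m"] by auto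
    moreover have "c \<in> A (max n m)" using m mono[of m "max n m"] by auto
    ultimately show ?case by auto
  qed
  then obtain n1 where n1: "C \<subseteq> A n1" by blast
  have "(\<Union>n. A n) \<noteq> {}"
  proof
    assume "(\<Union>n. A n) = {}"
    then have "closure (\<Union>n. A n) = {}" by simp
    with A3 show False by simp
  qed
  then obtain m z where z: "z \<in> A m" by auto
  define n0 where "n0 = max n1 m"
  have Cn0: "C \<subseteq> A n0" using n1 mono[of n1 n0] unfolding n0_def by auto
  have "0 *\<^sub>R z \<in> A m" using A2[of 0 m] z by blast
  then have zero: "0 \<in> A n0" using mono[of m n0] unfolding n0_def by auto
  define g where "g k = (K ^^ k) n0" for k
  have g_ge: "g k \<ge> n0" for k
    by (induction k) (auto simp: g_def intro: order_trans[OF _ K_ge])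
  have Ag: "A n0 \<subseteq> A (g k)" for k using mono[OF g_ge] .
  have key: "F \<subseteq> C \<Longrightarrow> (\<Sum>v\<in>F. u v *\<^sub>R v) \<in> A (g (card F))" if "finite F" for F u
    using that
  proof (induction F rule: finite_induct)
    case empty then show ?case using zero by (simp add: g_def)
  next
    case (insert x F)
    have s: "(\<Sum>v\<in>F. u v *\<^sub>R v) \<in> A (g (card F))" using insert by auto
    have "x \<in> A n0" using insert Cn0 by auto
    then have "u x *\<^sub>R x \<in> A n0" using A2 by blast
    then have "u x *\<^sub>R x \<in> A (g (card F))" using Ag by blast
    then have "u x *\<^sub>R x + (\<Sum>v\<in>F. u v *\<^sub>R v) \<in> A (K (g (card F)))" using s A1 by blast
    then show ?case using insert by (simp add: g_def)
  qed
  have "A (g (card C)) = UNIV"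
  proof
    show "UNIV \<subseteq> A (g (card C))"
    proof
      fix y :: 'a
      have "y \<in> span C" using spanC by simp
      then obtain u where "y = (\<Sum>v\<in>C. u v *\<^sub>R v)" unfolding span_finite[OF finC] by auto
      then show "y \<in> A (g (card C))" using key[OF finC] by auto
    qed
  qed simp
  then show ?thesis by blast
qed

end
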